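(* Let $(X,\mu)$ be a Lebesgue space with a continuous probability measure $\mu$, and let $\rho$ be a semimetric on $X$, measurable as a function on $(X\times X,\mu\times\mu)$, which satisfies the ultrametric inequality $\rho(x,z)\le\max(\rho(x,y),\rho(y,z))$ for $(\mu\times\mu\times\mu)$-almost all triples $(x,y,z)\in X^3$. Then there exists an ultrametric $\tilde\rho$ on $X$ which coincides with $\rho$ for $(\mu\times\mu)$-almost all pairs and satisfies $\tilde\rho(x,z)\le\max(\tilde\rho(x,y),\tilde\rho(y,z))$ for all triples $x,y,z\in X$.
   Context: A semimetric is a non-negative symmetric function on $X\times X$ satisfying the triangle inequality and vanishing on the diagonal (it may vanish off the diagonal). *)

theory Defs
  imports "HOL-Probability.Probability"
begin

text \<open>A Lebesgue space (standard probability space): the completion of a Borel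
probability measure on a Polish space. The points of the space are all elements
of the Polish type.\<close>
definition lebesgue_space :: "'a::polish_space measure \<Rightarrow> bool" where
  "lebesgue_space M \<longleftrightarrow>
     (\<exists>N. sets N = sets borel \<and> prob_space N \<and> M = completion N)"

definition continuous_measure :: "'a measure \<Rightarrow> bool" where
  "continuous_measure M \<longleftrightarrow> (\<forall>x\<in>space M. emeasure M {x} = 0)"

definition semimetric_on :: "'a set \<Rightarrow> ('a \<Rightarrow> 'a \<Rightarrow> real) \<Rightarrow> bool" where
  "semimetric_on X d \<longleftrightarrow>
     (\<forall>x\<in>X. \<forall>y\<in>X. d x y \<ge> 0) \<and>
     (\<forall>x\<in>X. \<forall>y\<in>X. d x y = d y x) \<and>
     (\<forall>x\<in>X. d x x = 0) \<and>
     (\<forall>x\<in>X. \<forall>y\<in>X. \<forall>z\<in>X. d x z \<le> d x y + d y z)"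

definition ultrametric_on :: "'a set \<Rightarrow> ('a \<Rightarrow> 'a \<Rightarrow> real) \<Rightarrow> bool" where
  "ultrametric_on X d \<longleftrightarrow> semimetric_on X d \<and>
     (\<forall>x\<in>X. \<forall>y\<in>X. \<forall>z\<in>X. d x z \<le> max (d x y) (d y z))"

end

theory Submission
  imports Defs
begin

context prob_space begin

lemma ae_ex: assumes "AE x in M. P x" shows "\<exists>x\<in>space M. P x"
proof (rule ccontr)
  assume c: "\<not> ?thesis"
  from assms obtain N where N: "{x \<in> space M. \<not> P x} \<subseteq> N" "emeasure M N = 0" "N \<in> sets M"
    by (rule AE_E)
  have "space M \<subseteq> N" using N(1) c by auto
  then have "emeasure M (space M) \<le> emeasure M N" using N(3) by (intro emeasure_mono) auto
  then show False using N(2) emeasure_space_1 by simp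
qed

lemma ex_in_pos:
  assumes "A \<in> sets M" "emeasure M A > 0" "AE y in M. y \<in> A \<longrightarrow> P y"
  shows "\<exists>y\<in>A. P y"
proof (rule ccontr)
  assume c: "\<not> ?thesis"
  from assms(3) obtain N where N: "{x \<in> space M. \<not> (x \<in> A \<longrightarrow> P x)} \<subseteq> N" "emeasure M N = 0" "N \<in> sets M"
    by (rule AE_E)
  have "A \<subseteq> N" using N(1) c sets.sets_into_space[OF assms(1)] by auto
  then have "emeasure M A \<le> emeasure M N" using N(3) by (intro emeasure_mono) auto
  then show False using N(2) assms(2) by simp
qed

lemma exists_pos_level:
  assumes h: "h \<in> borel_measurable M"
  shows "\<exists>n::nat. emeasure M {y\<in>space M. h y \<le> real n} > 0"
proof (rule ccontr)
  assume c: "\<not> ?thesis"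
  have "\<forall>n::nat. AE y in M. \<not> h y \<le> real n"
  proof
    fix n :: nat
    have "emeasure M {y\<in>space M. h y \<le> real n} = 0" using c by (simp add: not_less)
    then show "AE y in M. \<not> h y \<le> real n"
      by (subst AE_iff_measurable[OF _ refl]) (use h in measurable)
  qed
  then have "AE y in M. \<forall>n::nat. \<not> h y \<le> real n" by (simp add: AE_all_countable)
  then obtain y where "\<forall>n::nat. \<not> h y \<le> real n" using ae_ex by blast
  moreover obtain n :: nat where "h y \<le> real n" using real_arch_simple by blast
  ultimately show False by blast
qed

end

context prob_space begin

lemma null_to_ae:
  fixes h :: "'a \<Rightarrow> real"
  assumes h: "h \<in> borel_measurable M" and "emeasure M {y\<in>space M. h y \<le> t} = 0"
  shows "AE y in M. h y > t"
proof -
  have e: "{y\<in>space M. h y \<le> t} \<in> sets M" using h by measurable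
  have "{y\<in>space M. \<not> h y > t} = {y\<in>space M. h y \<le> t}" by auto
  from AE_iff_measurable[OF e this] assms(2) show ?thesis by simp
qed

lemma dist_pos:
  fixes h :: "'a \<Rightarrow> real"
  assumes h[measurable]: "h \<in> borel_measurable M"
  shows "AE z in M. emeasure M {y\<in>space M. h y \<le> h z} > 0"
proof -
  define T where "T = {t. emeasure M {y\<in>space M. h y \<le> t} = 0}"
  have mono: "t \<in> T" if "t' \<in> T" "t \<le> t'" for t t'
  proof -
    have "emeasure M {y\<in>space M. h y \<le> t} \<le> emeasure M {y\<in>space M. h y \<le> t'}"
      by (rule emeasure_mono) (use that in \<open>auto, measurable\<close>)
    then show ?thesis using that unfolding T_def by simp
  qed
  obtain n :: nat where n: "emeasure M {y\<in>space M. h y \<le> real n} > 0"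
    using exists_pos_level[OF h] by blast
  have bdd: "bdd_above T"
  proof (rule bdd_aboveI)
    fix t assume "t \<in> T"
    show "t \<le> real n"
    proof (rule ccontr)
      assume "\<not> t \<le> real n"
      then have "real n \<in> T" using mono[OF \<open>t \<in> T\<close>] by simp
      then show False using n unfolding T_def by simp
    qed
  qed
  have key: "AE z in M. h z \<notin> T"
  proof (cases "T = {}")
    case True then show ?thesis by simp
  next
    case ne: False
    define s where "s = Sup T"
    have le: "t \<le> s" if "t \<in> T" for t unfolding s_def using cSup_upper[OF that bdd] .
    show ?thesis
    proof (cases "s \<in> T")
      case True
      then have "AE z in M. h z > s" using null_to_ae[OF h] unfolding T_def by simp
      then show ?thesis by eventually_elim (use le in force)
    next
      case False
      have "\<forall>m::nat. AE z in M. h z > s - 1 / real (Suc m)"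
      proof
        fix m :: nat
        have "s - 1 / real (Suc m) < Sup T" unfolding s_def[symmetric] by simp
        then obtain t where t: "t \<in> T" "s - 1 / real (Suc m) < t"
          using less_cSup_iff[OF ne bdd] by blast
        then have "s - 1 / real (Suc m) \<in> T" using mono by simp
        then show "AE z in M. h z > s - 1 / real (Suc m)"
          using null_to_ae[OF h] unfolding T_def by simp
      qed
      then have "AE z in M. \<forall>m::nat. h z > s - 1 / real (Suc m)" by (simp add: AE_all_countable)
      then show ?thesis
      proof eventually_elim
        case (elim z)
        have "h z \<ge> s"
        proof (rule ccontr)
          assume "\<not> h z \<ge> s"
          then have "s - h z > 0" by simp
          then obtain m :: nat where "1 / real (Suc m) < s - h z"
            using nat_approx_posE by blast
          then show False using elim[rule_format, of m] by simp
        qed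
        then show ?case using le False by force
      qed
    qed
  qed
  then show ?thesis
    by eventually_elim (auto simp: T_def zero_less_iff_neq_zero)
qed

end

context prob_space begin

lemma tripA:
  assumes Q[measurable]: "Q \<in> sets (M \<Otimes>\<^sub>M (M \<Otimes>\<^sub>M M))"
  shows "emeasure (M \<Otimes>\<^sub>M (M \<Otimes>\<^sub>M M)) Q =
    (\<integral>\<^sup>+x. \<integral>\<^sup>+y. \<integral>\<^sup>+z. indicator Q (x,(y,z)) \<partial>M \<partial>M \<partial>M)"
proof -
  interpret MM: pair_prob_space M M by unfold_locales
  interpret A: pair_sigma_finite M "M \<Otimes>\<^sub>M M" by unfold_locales
  have "emeasure (M \<Otimes>\<^sub>M (M \<Otimes>\<^sub>M M)) Q = (\<integral>\<^sup>+p. indicator Q p \<partial>(M \<Otimes>\<^sub>M (M \<Otimes>\<^sub>M M)))"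
    by simp
  also have "\<dots> = (\<integral>\<^sup>+x. \<integral>\<^sup>+p. indicator Q (x,p) \<partial>(M \<Otimes>\<^sub>M M) \<partial>M)"
    by (rule sigma_finite_measure.nn_integral_fst[symmetric]) (unfold_locales, measurable)
  also have "\<dots> = (\<integral>\<^sup>+x. \<integral>\<^sup>+y. \<integral>\<^sup>+z. indicator Q (x,(y,z)) \<partial>M \<partial>M \<partial>M)"
    apply (rule nn_integral_cong)
    apply (subst nn_integral_fst[symmetric])
     apply (rule measurable_Pair2[OF borel_measurable_indicator[OF Q]], assumption)
    apply simp
    done
  finally show ?thesis .
qed

lemma tripB:
  assumes Q[measurable]: "Q \<in> sets ((M \<Otimes>\<^sub>M M) \<Otimes>\<^sub>M M)"
  shows "emeasure ((M \<Otimes>\<^sub>M M) \<Otimes>\<^sub>M M) Q =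
    (\<integral>\<^sup>+x. \<integral>\<^sup>+y. \<integral>\<^sup>+z. indicator Q ((x,y),z) \<partial>M \<partial>M \<partial>M)"
proof -
  interpret MM: pair_prob_space M M by unfold_locales
  interpret B: pair_sigma_finite "M \<Otimes>\<^sub>M M" M by unfold_locales
  have "emeasure ((M \<Otimes>\<^sub>M M) \<Otimes>\<^sub>M M) Q = (\<integral>\<^sup>+p. indicator Q p \<partial>((M \<Otimes>\<^sub>M M) \<Otimes>\<^sub>M M))"
    by simp
  also have "\<dots> = (\<integral>\<^sup>+p. \<integral>\<^sup>+z. indicator Q (p,z) \<partial>M \<partial>(M \<Otimes>\<^sub>M M))"
    by (rule nn_integral_fst[symmetric]) measurable
  also have "\<dots> = (\<integral>\<^sup>+x. \<integral>\<^sup>+y. \<integral>\<^sup>+z. indicator Q ((x,y),z) \<partial>M \<partial>M \<partial>M)"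
    apply (subst nn_integral_fst[symmetric])
     apply (rule borel_measurable_nn_integral_fst[OF borel_measurable_indicator[OF Q]])
    apply simp
    done
  finally show ?thesis .
qed

lemma perm1:
  "distr (M \<Otimes>\<^sub>M (M \<Otimes>\<^sub>M M)) (M \<Otimes>\<^sub>M (M \<Otimes>\<^sub>M M)) (\<lambda>(x,(y,z)). (y,(x,z))) = M \<Otimes>\<^sub>M (M \<Otimes>\<^sub>M M)"
  (is "distr ?A ?A ?f = ?A")
proof (rule measure_eqI)
  interpret MM: pair_prob_space M M by unfold_locales
  show "sets (distr ?A ?A ?f) = sets ?A" by simp
  fix Q assume "Q \<in> sets (distr ?A ?A ?f)"
  then have Q[measurable]: "Q \<in> sets ?A" by simp
  have f[measurable]: "?f \<in> ?A \<rightarrow>\<^sub>M ?A" by measurable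
  have "emeasure (distr ?A ?A ?f) Q = emeasure ?A (?f -` Q \<inter> space ?A)"
    by (rule emeasure_distr) measurable
  also have "\<dots> = (\<integral>\<^sup>+x. \<integral>\<^sup>+y. \<integral>\<^sup>+z. indicator Q (y,(x,z)) \<partial>M \<partial>M \<partial>M)"
    by (subst tripA) (measurable, auto intro!: nn_integral_cong simp: space_pair_measure indicator_def)
  also have "\<dots> = (\<integral>\<^sup>+y. \<integral>\<^sup>+x. \<integral>\<^sup>+z. indicator Q (y,(x,z)) \<partial>M \<partial>M \<partial>M)"
    by (rule MM.Fubini'[symmetric]) measurable
  also have "\<dots> = emeasure ?A Q" by (rule tripA[symmetric]) measurable
  finally show "emeasure (distr ?A ?A ?f) Q = emeasure ?A Q" .
qed

lemma B2A:
  "distr ((M \<Otimes>\<^sub>M M) \<Otimes>\<^sub>M M) (M \<Otimes>\<^sub>M (M \<Otimes>\<^sub>M M)) (\<lambda>p. (fst (fst p), (snd p, snd (fst p)))) = M \<Otimes>\<^sub>M (M \<Otimes>\<^sub>M M)"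
  (is "distr ?B ?A ?f = ?A")
proof (rule measure_eqI)
  interpret MM: pair_prob_space M M by unfold_locales
  show "sets (distr ?B ?A ?f) = sets ?A" by simp
  fix Q assume "Q \<in> sets (distr ?B ?A ?f)"
  then have Q[measurable]: "Q \<in> sets ?A" by simp
  have f[measurable]: "?f \<in> ?B \<rightarrow>\<^sub>M ?A" by measurable
  have "emeasure (distr ?B ?A ?f) Q = emeasure ?B (?f -` Q \<inter> space ?B)"
    by (rule emeasure_distr) measurable
  also have "\<dots> = (\<integral>\<^sup>+x. \<integral>\<^sup>+z. \<integral>\<^sup>+y. indicator Q (x,(y,z)) \<partial>M \<partial>M \<partial>M)"
    by (subst tripB) (measurable, auto intro!: nn_integral_cong simp: space_pair_measure indicator_def)
  also have "\<dots> = (\<integral>\<^sup>+x. \<integral>\<^sup>+y. \<integral>\<^sup>+z. indicator Q (x,(y,z)) \<partial>M \<partial>M \<partial>M)"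
    by (rule nn_integral_cong, rule MM.Fubini') measurable
  also have "\<dots> = emeasure ?A Q" by (rule tripA[symmetric]) measurable
  finally show "emeasure (distr ?B ?A ?f) Q = emeasure ?A Q" .
qed

lemma B2A':
  "distr ((M \<Otimes>\<^sub>M M) \<Otimes>\<^sub>M M) (M \<Otimes>\<^sub>M (M \<Otimes>\<^sub>M M)) (\<lambda>p. (snd p, (fst (fst p), snd (fst p)))) = M \<Otimes>\<^sub>M (M \<Otimes>\<^sub>M M)"
proof -
  have "distr ((M \<Otimes>\<^sub>M M) \<Otimes>\<^sub>M M) (M \<Otimes>\<^sub>M (M \<Otimes>\<^sub>M M)) (\<lambda>p. (snd p, (fst (fst p), snd (fst p)))) =
    distr (distr ((M \<Otimes>\<^sub>M M) \<Otimes>\<^sub>M M) (M \<Otimes>\<^sub>M (M \<Otimes>\<^sub>M M)) (\<lambda>p. (fst (fst p), (snd p, snd (fst p)))))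
       (M \<Otimes>\<^sub>M (M \<Otimes>\<^sub>M M)) (\<lambda>(x,(y,z)). (y,(x,z)))"
    by (subst distr_distr) (measurable, auto intro!: distr_cong simp: comp_def split: prod.splits)
  also have "\<dots> = M \<Otimes>\<^sub>M (M \<Otimes>\<^sub>M M)" by (simp add: B2A perm1)
  finally show ?thesis .
qed

end

context prob_space begin

lemma ae_fst:
  assumes "AE x in M. P x" shows "AE q in M \<Otimes>\<^sub>M M. P (fst q)"
proof -
  interpret MM: pair_prob_space M M by unfold_locales
  from assms obtain N where N: "{x \<in> space M. \<not> P x} \<subseteq> N" "emeasure M N = 0" "N \<in> sets M"
    by (rule AE_E)
  have "N \<times> space M \<in> null_sets (M \<Otimes>\<^sub>M M)"
    using N by (intro times_in_null_sets1 times_in_null_sets2) auto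
  then show ?thesis
    by (rule AE_I') (use N in \<open>auto simp: space_pair_measure\<close>)
qed

lemma ae_snd:
  assumes "AE x in M. P x" shows "AE q in M \<Otimes>\<^sub>M M. P (snd q)"
proof -
  interpret MM: pair_prob_space M M by unfold_locales
  from assms obtain N where N: "{x \<in> space M. \<not> P x} \<subseteq> N" "emeasure M N = 0" "N \<in> sets M"
    by (rule AE_E)
  have "space M \<times> N \<in> null_sets (M \<Otimes>\<^sub>M M)"
    using N by (intro times_in_null_sets1 times_in_null_sets2) auto
  then show ?thesis
    by (rule AE_I') (use N in \<open>auto simp: space_pair_measure\<close>)
qed

lemma pos_meas:
  fixes g :: "'a \<times> 'a \<Rightarrow> real"
  assumes g[measurable]: "g \<in> borel_measurable (M \<Otimes>\<^sub>M M)"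
  shows "AE q in M \<Otimes>\<^sub>M M. emeasure M {y\<in>space M. g (fst q, y) \<le> g q} > 0"
proof -
  interpret MM: pair_prob_space M M by unfold_locales
  define R where "R = {p \<in> space ((M \<Otimes>\<^sub>M M) \<Otimes>\<^sub>M M). g (fst (fst p), snd p) \<le> g (fst p)}"
  have R: "R \<in> sets ((M \<Otimes>\<^sub>M M) \<Otimes>\<^sub>M M)" unfolding R_def by measurable
  have "(\<lambda>q. emeasure M (Pair q -` R)) \<in> borel_measurable (M \<Otimes>\<^sub>M M)"
    by (rule measurable_emeasure_Pair[OF R])
  moreover have "Pair q -` R = {y\<in>space M. g (fst q, y) \<le> g q}" if "q \<in> space (M \<Otimes>\<^sub>M M)" for q
    using that unfolding R_def by (auto simp: space_pair_measure)
  ultimately have F[measurable]: "(\<lambda>q. emeasure M {y\<in>space M. g (fst q, y) \<le> g q}) \<in> borel_measurable (M \<Otimes>\<^sub>M M)"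
    using measurable_cong[of "M \<Otimes>\<^sub>M M" "\<lambda>q. emeasure M (Pair q -` R)" "\<lambda>q. emeasure M {y\<in>space M. g (fst q, y) \<le> g q}" borel]
    by simp
  have S: "{q \<in> space (M \<Otimes>\<^sub>M M). emeasure M {y\<in>space M. g (fst q, y) \<le> g q} > 0} \<in> sets (M \<Otimes>\<^sub>M M)"
    by measurable
  show ?thesis
  proof (rule MM.AE_pair_measure[OF S])
    show "AE x in M. AE y in M. 0 < emeasure M {ya \<in> space M. g (fst (x, y), ya) \<le> g (x, y)}"
    proof (rule AE_I2)
      fix x assume x: "x \<in> space M"
      have "(\<lambda>y. g (x, y)) \<in> borel_measurable M" using x by measurable
      from dist_pos[OF this] show "AE y in M. 0 < emeasure M {ya \<in> space M. g (fst (x, y), ya) \<le> g (x, y)}"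
        by simp
    qed
  qed
qed

end

theorem mainTheorem4:
  fixes M :: "'a::polish_space measure" and \<rho> :: "'a \<Rightarrow> 'a \<Rightarrow> real"
  assumes "lebesgue_space M"
    and "continuous_measure M"
    and "semimetric_on (space M) \<rho>"
    and "(\<lambda>p. \<rho> (fst p) (snd p)) \<in> borel_measurable (completion (M \<Otimes>\<^sub>M M))"
    and "AE p in M \<Otimes>\<^sub>M (M \<Otimes>\<^sub>M M).
           \<rho> (fst p) (snd (snd p)) \<le> max (\<rho> (fst p) (fst (snd p))) (\<rho> (fst (snd p)) (snd (snd p)))"
  shows "\<exists>\<rho>'. ultrametric_on (space M) \<rho>' \<and>
           (AE p in M \<Otimes>\<^sub>M M. \<rho>' (fst p) (snd p) = \<rho> (fst p) (snd p))"
proof -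
  obtain N where N: "sets N = sets borel" "prob_space N" "M = completion N"
    using assms(1) unfolding lebesgue_space_def by blast
  interpret P: prob_space M using N by (simp add: prob_space.prob_space_completion)
  interpret MM: pair_prob_space M M by unfold_locales
  interpret A: pair_sigma_finite M "M \<Otimes>\<^sub>M M" by unfold_locales
  interpret B: pair_sigma_finite "M \<Otimes>\<^sub>M M" M by unfold_locales
  have spM: "space M = UNIV" using N by (simp add: sets_eq_imp_space_eq[OF N(1)])
  have nn: "\<rho> x y \<ge> 0" for x y using assms(3) spM unfolding semimetric_on_def by auto
  have sym: "\<rho> x y = \<rho> y x" for x y using assms(3) spM unfolding semimetric_on_def by auto
  have diag: "\<rho> x x = 0" for x using assms(3) spM unfolding semimetric_on_def by auto
  define U where "U x y z \<longleftrightarrow> \<rho> x z \<le> max (\<rho> x y) (\<rho> y z)" for x y z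
  have H: "AE p in M \<Otimes>\<^sub>M (M \<Otimes>\<^sub>M M). U (fst p) (fst (snd p)) (snd (snd p))"
    using assms(5) unfolding U_def .
  obtain g where g[measurable]: "g \<in> borel_measurable (M \<Otimes>\<^sub>M M)"
    and gae: "AE p in M \<Otimes>\<^sub>M M. \<rho> (fst p) (snd p) = g p"
    using completion_ex_borel_measurable_real[OF assms(4)] by blast
  have gslice: "AE x in M. AE y in M. \<rho> x y = g (x, y)"
    using MM.AE_pair[OF gae] by simp
  have P1: "AE w in M. AE q in M \<Otimes>\<^sub>M M. U (fst q) w (snd q)"
  proof -
    have "AE p in distr (M \<Otimes>\<^sub>M (M \<Otimes>\<^sub>M M)) (M \<Otimes>\<^sub>M (M \<Otimes>\<^sub>M M)) (\<lambda>(x,(y,z)). (y,(x,z))).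
            U (fst p) (fst (snd p)) (snd (snd p))"
      by (subst P.perm1) (rule H)
    from AE_distrD[OF _ this] have "AE p in M \<Otimes>\<^sub>M (M \<Otimes>\<^sub>M M). U (fst (snd p)) (fst p) (snd (snd p))"
      by (simp add: split_beta)
    then show ?thesis using A.AE_pair by fastforce
  qed
  have P2: "AE z in M. AE q in M \<Otimes>\<^sub>M M. U (fst q) (snd q) z"
  proof -
    have "AE z in M. AE q in M \<Otimes>\<^sub>M M. U z (fst q) (snd q)"
      using A.AE_pair[OF H] by simp
    then show ?thesis
    proof eventually_elim
      case (elim z)
      then have "AE q in distr (M \<Otimes>\<^sub>M M) (M \<Otimes>\<^sub>M M) (\<lambda>(x, y). (y, x)). U z (fst q) (snd q)"
        by (subst MM.distr_pair_swap[symmetric])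
      from AE_distrD[OF _ this] have "AE q in M \<Otimes>\<^sub>M M. U z (snd q) (fst q)"
        by (simp add: split_beta)
      then show ?case
        by eventually_elim (simp add: U_def sym max.commute)
    qed
  qed
  have P3: "AE q in M \<Otimes>\<^sub>M M. AE y in M. U (fst q) y (snd q)"
  proof -
    have "AE p in distr ((M \<Otimes>\<^sub>M M) \<Otimes>\<^sub>M M) (M \<Otimes>\<^sub>M (M \<Otimes>\<^sub>M M)) (\<lambda>p. (fst (fst p), (snd p, snd (fst p)))).
            U (fst p) (fst (snd p)) (snd (snd p))"
      by (subst P.B2A) (rule H)
    from AE_distrD[OF _ this] have "AE p in (M \<Otimes>\<^sub>M M) \<Otimes>\<^sub>M M. U (fst (fst p)) (snd p) (snd (fst p))"
      by simp
    then show ?thesis using B.AE_pair by fastforce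
  qed
  have P4: "AE q in M \<Otimes>\<^sub>M M. AE y in M. U y (fst q) (snd q)"
  proof -
    have "AE p in distr ((M \<Otimes>\<^sub>M M) \<Otimes>\<^sub>M M) (M \<Otimes>\<^sub>M (M \<Otimes>\<^sub>M M)) (\<lambda>p. (snd p, (fst (fst p), snd (fst p)))).
            U (fst p) (fst (snd p)) (snd (snd p))"
      by (subst P.B2A') (rule H)
    from AE_distrD[OF _ this] have "AE p in (M \<Otimes>\<^sub>M M) \<Otimes>\<^sub>M M. U (snd p) (fst (fst p)) (snd (fst p))"
      by simp
    then show ?thesis using B.AE_pair by fastforce
  qed
  define G where "G = {w. (AE y in M. \<rho> w y = g (w, y)) \<and> (AE q in M \<Otimes>\<^sub>M M. U (fst q) w (snd q))
      \<and> (AE q in M \<Otimes>\<^sub>M M. U (fst q) (snd q) w)}"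
  have aeG: "AE w in M. w \<in> G"
    using gslice P1 P2 unfolding G_def by eventually_elim auto
  define S where "S x z = {r. \<exists>A\<in>sets M. emeasure M A > 0 \<and> (AE y in M. y \<in> A \<longrightarrow> max (\<rho> x y) (\<rho> y z) \<le> r)}" for x z
  define E where "E x z = Inf (S x z)" for x z
  have S_nn: "r \<ge> 0" if "r \<in> S x z" for r x z
  proof -
    from that obtain A where A: "A \<in> sets M" "emeasure M A > 0" "AE y in M. y \<in> A \<longrightarrow> max (\<rho> x y) (\<rho> y z) \<le> r"
      unfolding S_def by blast
    from P.ex_in_pos[OF A] obtain y where "max (\<rho> x y) (\<rho> y z) \<le> r" by blast
    then show ?thesis using nn[of x y] by simp
  qed
  have bdd: "bdd_below (S x z)" for x z using S_nn by (intro bdd_belowI) 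
  have S_sym: "S x z = S z x" for x z unfolding S_def by (simp add: sym max.commute)
  have E_sym: "E x z = E z x" for x z unfolding E_def using S_sym by simp
  have S_ne: "S x z \<noteq> {}" if "x \<in> G" "z \<in> G" for x z
  proof -
    have gx: "AE y in M. \<rho> x y = g (x, y)" and gz: "AE y in M. \<rho> z y = g (z, y)"
      using that unfolding G_def by auto
    have hm: "(\<lambda>y. max \<bar>g (x, y)\<bar> \<bar>g (z, y)\<bar>) \<in> borel_measurable M"
      by (intro borel_measurable_max borel_measurable_abs measurable_Pair2[OF g]) (simp_all add: spM)
    obtain n :: nat where n: "emeasure M {y\<in>space M. max \<bar>g (x, y)\<bar> \<bar>g (z, y)\<bar> \<le> real n} > 0"
      using P.exists_pos_level[OF hm] by blast
    have Am: "{y\<in>space M. max \<bar>g (x, y)\<bar> \<bar>g (z, y)\<bar> \<le> real n} \<in> sets M" using hm by measurable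
    have "AE y in M. y \<in> {y\<in>space M. max \<bar>g (x, y)\<bar> \<bar>g (z, y)\<bar> \<le> real n} \<longrightarrow> max (\<rho> x y) (\<rho> y z) \<le> real n"
      using gx gz by eventually_elim (auto simp: sym[of _ z])
    then have "real n \<in> S x z" unfolding S_def using Am n by blast
    then show ?thesis by blast
  qed
  have E_nn: "E x z \<ge> 0" if "x \<in> G" "z \<in> G" for x z
    unfolding E_def using S_ne[OF that] S_nn by (intro cInf_greatest) auto
  have E_ultra: "E x z \<le> max (E x w) (E w z)" if G: "x \<in> G" "w \<in> G" "z \<in> G" for x w z
  proof (rule field_le_epsilon)
    fix e :: real assume e: "e > 0"
    obtain a where a: "a \<in> S x w" "a < E x w + e"
      using cInf_less_iff[OF S_ne[OF G(1,2)] bdd, of "E x w + e"] e unfolding E_def by auto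
    obtain b where b: "b \<in> S w z" "b < E w z + e"
      using cInf_less_iff[OF S_ne[OF G(2,3)] bdd, of "E w z + e"] e unfolding E_def by auto
    from a(1) obtain A where A: "A \<in> sets M" "emeasure M A > 0"
      "AE y in M. y \<in> A \<longrightarrow> max (\<rho> x y) (\<rho> y w) \<le> a" unfolding S_def by blast
    from b(1) obtain A' where A': "A' \<in> sets M" "emeasure M A' > 0"
      "AE y in M. y \<in> A' \<longrightarrow> max (\<rho> w y) (\<rho> y z) \<le> b" unfolding S_def by blast
    have iii: "AE y in M. AE y' in M. U y w y'"
      using MM.AE_pair[of "\<lambda>q. U (fst q) w (snd q)"] G(2) unfolding G_def by auto
    have iv: "AE y in M. AE y' in M. U y y' z"
      using MM.AE_pair[of "\<lambda>q. U (fst q) (snd q) z"] G(3) unfolding G_def by auto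
    have "AE y in M. y \<in> A \<longrightarrow> max (\<rho> x y) (\<rho> y z) \<le> max a b"
      using A(3) iii iv
    proof eventually_elim
      case (elim y)
      show ?case
      proof
        assume yA: "y \<in> A"
        have "AE y' in M. y' \<in> A' \<longrightarrow> (max (\<rho> w y') (\<rho> y' z) \<le> b \<and> U y w y' \<and> U y y' z)"
          using A'(3) elim(2,3) by eventually_elim auto
        from P.ex_in_pos[OF A'(1,2) this] obtain y' where
          y': "max (\<rho> w y') (\<rho> y' z) \<le> b" "U y w y'" "U y y' z" by blast
        have "\<rho> y w \<le> a" "\<rho> x y \<le> a" using elim(1) yA by auto
        then show "max (\<rho> x y) (\<rho> y z) \<le> max a b" using y' unfolding U_def by auto
      qed
    qed
    then have "max a b \<in> S x z" unfolding S_def using A(1,2) by blast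
    then have "E x z \<le> max a b" unfolding E_def by (rule cInf_lower[OF _ bdd])
    also have "\<dots> \<le> max (E x w) (E w z) + e" using a b by auto
    finally show "E x z \<le> max (E x w) (E w z) + e" .
  qed
  have Eeq: "AE q in M \<Otimes>\<^sub>M M. E (fst q) (snd q) = \<rho> (fst q) (snd q)"
  proof -
    have d: "AE q in M \<Otimes>\<^sub>M M. AE y in M. \<rho> (fst q) y = g (fst q, y)"
      by (rule P.ae_fst[OF gslice])
    show ?thesis using P3 P4 gae d P.pos_meas[OF g]
    proof eventually_elim
      case (elim q)
      obtain x z where q: "q = (x, z)" by (cases q)
      have a: "AE y in M. U x y z" and b: "AE y in M. U y x z" and c: "\<rho> x z = g (x, z)"
        and d: "AE y in M. \<rho> x y = g (x, y)"
        and e: "emeasure M {y\<in>space M. g (x, y) \<le> g (x, z)} > 0"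
        using elim unfolding q by auto
      have hm: "(\<lambda>y. g (x, y)) \<in> borel_measurable M"
        by (rule measurable_Pair2[OF g]) (simp add: spM)
      have Am: "{y\<in>space M. g (x, y) \<le> g (x, z)} \<in> sets M"
        using hm by measurable
      have "AE y in M. y \<in> {y\<in>space M. g (x, y) \<le> g (x, z)} \<longrightarrow> max (\<rho> x y) (\<rho> y z) \<le> \<rho> x z"
        using b d by eventually_elim (auto simp: c U_def sym[of y x for y])
      then have mem: "\<rho> x z \<in> S x z" unfolding S_def using Am e by blast
      have le1: "E x z \<le> \<rho> x z" unfolding E_def by (rule cInf_lower[OF mem bdd])
      have le2: "\<rho> x z \<le> E x z" unfolding E_def
      proof (rule cInf_greatest)
        show "S x z \<noteq> {}" using mem by blast
        fix r assume "r \<in> S x z"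
        then obtain A where A: "A \<in> sets M" "emeasure M A > 0"
          "AE y in M. y \<in> A \<longrightarrow> max (\<rho> x y) (\<rho> y z) \<le> r" unfolding S_def by blast
        have "AE y in M. y \<in> A \<longrightarrow> max (\<rho> x y) (\<rho> y z) \<le> r \<and> U x y z"
          using A(3) a by eventually_elim auto
        from P.ex_in_pos[OF A(1,2) this] show "\<rho> x z \<le> r" unfolding U_def by auto
      qed
      show ?case using le1 le2 q by simp
    qed
  qed
  obtain g0 where g0: "g0 \<in> G" using P.ae_ex[OF aeG] by blast
  define pi where "pi x = (if x \<in> G then x else g0)" for x
  have piG: "pi x \<in> G" for x using g0 unfolding pi_def by auto
  define r' where "r' x z = (if pi x = pi z then 0 else E (pi x) (pi z))" for x z
  have r'nn: "r' x z \<ge> 0" for x z unfolding r'_def using E_nn[OF piG piG] by auto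
  have r'sym: "r' x z = r' z x" for x z unfolding r'_def using E_sym by auto
  have r'ultra: "r' x z \<le> max (r' x y) (r' y z)" for x y z
  proof -
    have "E (pi x) (pi z) \<le> max (E (pi x) (pi y)) (E (pi y) (pi z))"
      by (rule E_ultra[OF piG piG piG])
    then show ?thesis unfolding r'_def using r'nn[of x y] r'nn[of y z]
      by (auto simp: r'_def)
  qed
  have "ultrametric_on (space M) r'"
    unfolding ultrametric_on_def semimetric_on_def
  proof (intro conjI ballI)
    fix x y z
    show "0 \<le> r' x y" by (rule r'nn)
    show "r' x y = r' y x" by (rule r'sym)
    show "r' x x = 0" unfolding r'_def by simp
    show "r' x z \<le> max (r' x y) (r' y z)" by (rule r'ultra)
    then show "r' x z \<le> r' x y + r' y z" using r'nn[of x y] r'nn[of y z] by linarith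
  qed
  moreover have "AE p in M \<Otimes>\<^sub>M M. r' (fst p) (snd p) = \<rho> (fst p) (snd p)"
    using Eeq P.ae_fst[OF aeG] P.ae_snd[OF aeG]
  proof eventually_elim
    case (elim q)
    then show ?case unfolding r'_def pi_def by (auto simp: diag)
  qed
  ultimately show ?thesis by blast
qed

end
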